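(* Consider the $L$-layer LSTM described in the context, regarded as a discrete-time system with state $s(t)=(s^{(1)}(t),\dots,s^{(L)}(t))$ and input $u(t)=(x(t),b^{(1)}_c,\dots,b^{(L)}_c)$, and let $k\in\mathbb{Z}_{\ge0}$. Suppose $\rho(A^{(l)}(k))<1$ for all $l\in[L]$, where $A^{(l)}(k)=\begin{bmatrix}\overline{\sigma}^{(l)}_f(k)&\overline{\sigma}^{(l)}_i(k)\|U^{(l)}_c\|\\ \overline{\sigma}^{(l)}_o(k)\overline{\sigma}^{(l)}_f(k)&\overline{\sigma}^{(l)}_o(k)\overline{\sigma}^{(l)}_i(k)\|U^{(l)}_c\|\end{bmatrix}$. Then the LSTM is input-to-state stable for initial states in $\prod_{l=1}^L\mathcal{S}^{(l)}(k)$: there exist continuous $\beta\in\mathcal{KL}$ and $\gamma\in\mathcal{K}_\infty$ such that for every initial state $s(0)$ with $s^{(l)}(0)\in\mathcal{S}^{(l)}(k)$ for all $l\in[L]$, every input sequence with $x(\tau)\in[-x_{\max},x_{\max}]^{n_x}$, and every $t\in\mathbb{Z}_{\ge0}$, $\|s(t)\|\le\beta(\|s(0)\|,t)+\gamma(\|u(0:t)\|_{2,\infty})$. Furthermore, $\rho(A^{(l)}(k+1))\le\rho(A^{(l)}(k))$ for all $k\in\mathbb{Z}_{\ge0}$ and $l\in[L]$.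
   Context: LSTM: fix $L\in\mathbb{N}$, dimensions $n_x,n_c$, $x_{\max}>0$. For $l\in[L]$ let $n^{(l)}=n_x$ if $l=1$, $n^{(l)}=n_c$ if $l\ge2$; weights $W^{(l)}_*\in\mathbb{R}^{n_c\times n^{(l)}}$, $U^{(l)}_*\in\mathbb{R}^{n_c\times n_c}$, biases $b^{(l)}_*\in\mathbb{R}^{n_c}$, $*\in\{f,i,c,o\}$. With $\sigma(w)=1/(1+e^{-w})$, $\phi=\tanh$, $\odot$ componentwise product: $c^{(l)}(t+1)=\sigma(W^{(l)}_f x^{(l)}(t)+U^{(l)}_f h^{(l)}(t)+b^{(l)}_f)\odot c^{(l)}(t)+\sigma(W^{(l)}_i x^{(l)}(t)+U^{(l)}_i h^{(l)}(t)+b^{(l)}_i)\odot\phi(W^{(l)}_c x^{(l)}(t)+U^{(l)}_c h^{(l)}(t)+b^{(l)}_c)$, $h^{(l)}(t+1)=\sigma(W^{(l)}_o x^{(l)}(t)+U^{(l)}_o h^{(l)}(t)+b^{(l)}_o)\odot\phi(c^{(l)}(t+1))$, with $x^{(1)}(t)=x(t)$, $x^{(l)}(t)=h^{(l-1)}(t+1)$ for $l\ge2$; $s^{(l)}=(c^{(l)},h^{(l)})$. Quantities: $x^{(l)}_{\max}=x_{\max}$ if $l=1$, $=1$ if $l\ge2$; $|A|$ entrywise absolute value; $\mathbf{1}_n$ all-ones vector; $v_+$ componentwise positive part; $\|\cdot\|_\infty$ max norm. For $\eta\ge0$, $*\in\{f,i,o\}$: $G^{(l)}_*(\eta)=\|(x^{(l)}_{\max}|W^{(l)}_*|\mathbf{1}_{n^{(l)}}+\eta|U^{(l)}_*|\mathbf{1}_{n_c}+b^{(l)}_*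 )_+\|_\infty$, $G^{(l)}_c(\eta)=\|x^{(l)}_{\max}|W^{(l)}_c|\mathbf{1}_{n^{(l)}}+\eta|U^{(l)}_c|\mathbf{1}_{n_c}+|b^{(l)}_c|\|_\infty$. With $\eta^{(l)}(-1)=1$, $k\ge0$: $\overline{\sigma}^{(l)}_*(k)=\sigma(G^{(l)}_*(\eta^{(l)}(k-1)))$, $\overline{\phi}^{(l)}_c(k)=\phi(G^{(l)}_c(\eta^{(l)}(k-1)))$, $\overline{c}^{(l)}(k)=\overline{\sigma}^{(l)}_i(k)\overline{\phi}^{(l)}_c(k)/(1-\overline{\sigma}^{(l)}_f(k))$, $\eta^{(l)}(k)=\phi(\overline{c}^{(l)}(k))\overline{\sigma}^{(l)}_o(k)$. $\mathcal{S}^{(l)}(k)=\{(c,h):\|c\|_\infty\le\overline{c}^{(l)}(k),\|h\|_\infty\le\phi(\overline{c}^{(l)}(k))\overline{\sigma}^{(l)}_o(k)\}$. $\|\cdot\|$ is the Euclidean norm / induced 2-norm, $\rho$ the spectral radius, and $\|u(0:t)\|_{2,\infty}=\max_{0\le\tau\le t}\|u(\tau)\|_2$. Classes: $\alpha$ is $\mathcal{K}$ if continuous, strictly increasing, $\alpha(0)=0$; $\mathcal{K}_\infty$ if moreover unbounded; $\beta$ is $\mathcal{KL}$ if $\beta(\cdot,t)\in\mathcal{K}$ for each $t$ and $\beta(s,\cdot)$ decreases to $0$. *)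

theory Defs
  imports "HOL-Analysis.Analysis" "Jordan_Normal_Form.Spectral_Radius"
begin

(* Gates of an LSTM cell: forget, input, cell (candidate), output *)
datatype gate = Fg | Ig | Cg | Og

(* LSTM parameters.  Layers are indexed l = 1..L.
   lstm_W1 g   : W^{(1)}_g, an n_c x n_x matrix (input layer)
   lstm_W l g  : W^{(l)}_g for l >= 2, an n_c x n_c matrix
   lstm_U l g  : U^{(l)}_g, an n_c x n_c matrix
   lstm_b l g  : b^{(l)}_g in R^{n_c}
   'x indexes R^{n_x}, 'c indexes R^{n_c}. *)
record ('x, 'c) lstm =
  lstm_W1 :: "gate \<Rightarrow> real^'x^'c"
  lstm_W  :: "nat \<Rightarrow> gate \<Rightarrow> real^'c^'c"
  lstm_U  :: "nat \<Rightarrow> gate \<Rightarrow> real^'c^'c"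
  lstm_b  :: "nat \<Rightarrow> gate \<Rightarrow> real^'c"

definition sigmoid :: "real \<Rightarrow> real" where
  "sigmoid w = 1 / (1 + exp (- w))"

definition vsig :: "real^'c \<Rightarrow> real^'c" where
  "vsig v = (\<chi> i. sigmoid (v $ i))"

definition vtanh :: "real^'c \<Rightarrow> real^'c" where
  "vtanh v = (\<chi> i. tanh (v $ i))"

definition hadamard :: "real^'c \<Rightarrow> real^'c \<Rightarrow> real^'c" where
  "hadamard u v = (\<chi> i. u $ i * v $ i)"

(* one LSTM cell update of layer l; wx g = W^{(l)}_g x^{(l)}(t); state (c,h) *)
definition cell :: "('x::finite, 'c::finite) lstm \<Rightarrow> nat \<Rightarrow> (gate \<Rightarrow> real^'c)
    \<Rightarrow> (real^'c) \<times> (real^'c) \<Rightarrow> (real^'c) \<times> (real^'c)" where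
  "cell P l wx s =
     (let c = fst s; h = snd s;
          pre = (\<lambda>g. wx g + lstm_U P l g *v h + lstm_b P l g);
          c' = hadamard (vsig (pre Fg)) c + hadamard (vsig (pre Ig)) (vtanh (pre Cg));
          h' = hadamard (vsig (pre Og)) (vtanh c')
      in (c', h'))"

(* Full state: layer index \<Rightarrow> (c^{(l)}, h^{(l)}) (index 0 unused).
   new_state P xt S l computes s^{(l)}(t+1) from S = s(t) and xt = x(t),
   with x^{(1)}(t) = x(t), x^{(l)}(t) = h^{(l-1)}(t+1). *)
primrec new_state :: "('x::finite, 'c::finite) lstm \<Rightarrow> real^'x
    \<Rightarrow> (nat \<Rightarrow> (real^'c) \<times> (real^'c)) \<Rightarrow> nat \<Rightarrow> (real^'c) \<times> (real^'c)" where
  "new_state P xt S 0 = S 0"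
| "new_state P xt S (Suc l) =
     cell P (Suc l)
       (if l = 0 then (\<lambda>g. lstm_W1 P g *v xt)
        else (\<lambda>g. lstm_W P (Suc l) g *v snd (new_state P xt S l)))
       (S (Suc l))"

(* trajectory s(t) from initial state s0 under input sequence x *)
primrec traj :: "('x::finite, 'c::finite) lstm \<Rightarrow> (nat \<Rightarrow> (real^'c) \<times> (real^'c))
    \<Rightarrow> (nat \<Rightarrow> real^'x) \<Rightarrow> nat \<Rightarrow> (nat \<Rightarrow> (real^'c) \<times> (real^'c))" where
  "traj P s0 x 0 = s0"
| "traj P s0 x (Suc t) = new_state P (x t) (traj P s0 x t)"

(* Euclidean norm of the stacked state s = (s^{(1)},...,s^{(L)}) *)
definition state_norm :: "nat \<Rightarrow> (nat \<Rightarrow> (real^'c) \<times> (real^'c)) \<Rightarrow> real" where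
  "state_norm L S = sqrt (\<Sum>l=1..L. (norm (fst (S l)))\<^sup>2 + (norm (snd (S l)))\<^sup>2)"

(* Euclidean norm of u(t) = (x(t), b_c^{(1)}, ..., b_c^{(L)}) *)
definition input_norm :: "('x::finite, 'c::finite) lstm \<Rightarrow> nat \<Rightarrow> real^'x \<Rightarrow> real" where
  "input_norm P L xt = sqrt ((norm xt)\<^sup>2 + (\<Sum>l=1..L. (norm (lstm_b P l Cg))\<^sup>2))"

(* \<parallel>u(0:t)\<parallel>_{2,\<infinity>} *)
definition input_sup_norm :: "('x::finite, 'c::finite) lstm \<Rightarrow> nat \<Rightarrow> (nat \<Rightarrow> real^'x) \<Rightarrow> nat \<Rightarrow> real" where
  "input_sup_norm P L x t = Max ((\<lambda>\<tau>. input_norm P L (x \<tau>)) ` {0..t})"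

(* sum_j |M_ij|, i.e. the i-th entry of |M| 1 *)
definition abs_row_sum :: "real^'n::finite^'m \<Rightarrow> 'm \<Rightarrow> real" where
  "abs_row_sum M i = (\<Sum>j\<in>UNIV. \<bar>M $ i $ j\<bar>)"

(* i-th entry of x^{(l)}_max |W^{(l)}_g| 1 *)
definition Wterm :: "('x::finite, 'c::finite) lstm \<Rightarrow> real \<Rightarrow> nat \<Rightarrow> gate \<Rightarrow> 'c \<Rightarrow> real" where
  "Wterm P xmax l g i =
     (if l = 1 then xmax * abs_row_sum (lstm_W1 P g) i else 1 * abs_row_sum (lstm_W P l g) i)"

(* G^{(l)}_g(\<eta>) *)
definition Gfun :: "('x::finite, 'c::finite) lstm \<Rightarrow> real \<Rightarrow> nat \<Rightarrow> gate \<Rightarrow> real \<Rightarrow> real" where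
  "Gfun P xmax l g \<eta> =
     (if g = Cg then
        infnorm (\<chi> i. Wterm P xmax l Cg i + \<eta> * abs_row_sum (lstm_U P l Cg) i + \<bar>lstm_b P l Cg $ i\<bar>)
      else
        infnorm (\<chi> i. max 0 (Wterm P xmax l g i + \<eta> * abs_row_sum (lstm_U P l g) i + lstm_b P l g $ i)))"

definition sig_of :: "('x::finite, 'c::finite) lstm \<Rightarrow> real \<Rightarrow> nat \<Rightarrow> gate \<Rightarrow> real \<Rightarrow> real" where
  "sig_of P xmax l g \<eta> = sigmoid (Gfun P xmax l g \<eta>)"

definition cbar_of :: "('x::finite, 'c::finite) lstm \<Rightarrow> real \<Rightarrow> nat \<Rightarrow> real \<Rightarrow> real" where
  "cbar_of P xmax l \<eta> =
     sig_of P xmax l Ig \<eta> * tanh (Gfun P xmax l Cg \<eta>) / (1 - sig_of P xmax l Fg \<eta>)"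

(* eta_prev P xmax l k = \<eta>^{(l)}(k-1), with \<eta>^{(l)}(-1) = 1 *)
primrec eta_prev :: "('x::finite, 'c::finite) lstm \<Rightarrow> real \<Rightarrow> nat \<Rightarrow> nat \<Rightarrow> real" where
  "eta_prev P xmax l 0 = 1"
| "eta_prev P xmax l (Suc k) =
     tanh (cbar_of P xmax l (eta_prev P xmax l k)) * sig_of P xmax l Og (eta_prev P xmax l k)"

(* \<overline>\<sigma>^{(l)}_g(k) *)
definition sigbar :: "('x::finite, 'c::finite) lstm \<Rightarrow> real \<Rightarrow> nat \<Rightarrow> gate \<Rightarrow> nat \<Rightarrow> real" where
  "sigbar P xmax l g k = sig_of P xmax l g (eta_prev P xmax l k)"

(* \<overline>c^{(l)}(k) *)
definition cbar :: "('x::finite, 'c::finite) lstm \<Rightarrow> real \<Rightarrow> nat \<Rightarrow> nat \<Rightarrow> real" where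
  "cbar P xmax l k = cbar_of P xmax l (eta_prev P xmax l k)"

(* \<S>^{(l)}(k) *)
definition Sset :: "('x::finite, 'c::finite) lstm \<Rightarrow> real \<Rightarrow> nat \<Rightarrow> nat \<Rightarrow> ((real^'c) \<times> (real^'c)) set" where
  "Sset P xmax l k = {(c, h). infnorm c \<le> cbar P xmax l k \<and>
                              infnorm h \<le> tanh (cbar P xmax l k) * sigbar P xmax l Og k}"

(* the 2x2 matrix A^{(l)}(k); \<parallel>U_c\<parallel> is the induced 2-norm *)
definition Amat :: "('x::finite, 'c::finite) lstm \<Rightarrow> real \<Rightarrow> nat \<Rightarrow> nat \<Rightarrow> complex Matrix.mat" where
  "Amat P xmax l k =
     (let sf = sigbar P xmax l Fg k; si = sigbar P xmax l Ig k; so = sigbar P xmax l Og k;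
          nU = onorm (\<lambda>v. lstm_U P l Cg *v v)
      in map_mat complex_of_real
           (mat_of_rows_list 2 [[sf, si * nU], [so * sf, so * si * nU]]))"

(* comparison function classes on [0, \<infinity>); KL functions have discrete time argument *)
definition classK :: "(real \<Rightarrow> real) \<Rightarrow> bool" where
  "classK \<alpha> \<longleftrightarrow> continuous_on {0..} \<alpha> \<and> strict_mono_on {0..} \<alpha> \<and> \<alpha> 0 = 0"

definition classKinf :: "(real \<Rightarrow> real) \<Rightarrow> bool" where
  "classKinf \<alpha> \<longleftrightarrow> classK \<alpha> \<and> (\<forall>M. \<exists>s\<ge>0. \<alpha> s > M)"

definition classKL :: "(real \<Rightarrow> nat \<Rightarrow> real) \<Rightarrow> bool" where
  "classKL \<beta> \<longleftrightarrow> (\<forall>t. classK (\<lambda>s. \<beta> s t)) \<and>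
     (\<forall>s\<ge>0. antimono (\<beta> s) \<and> (\<beta> s \<longlonglongrightarrow> 0))"

end

theory Submission
  imports Defs
begin

no_notation Matrix.vec_index (infixl "$" 100)

lemma sr_rank1:
  fixes a b s :: real assumes "a \<ge> 0" "b \<ge> 0" "s \<ge> 0"
  shows "spectral_radius (map_mat complex_of_real (mat_of_rows_list 2 [[a, b], [s*a, s*b]])) = a + s*b"
proof -
  define M where "M = map_mat complex_of_real (mat_of_rows_list 2 [[a, b], [s*a, s*b]])"
  define A B S where "A = complex_of_real a" and "B = complex_of_real b" and "S = complex_of_real s"
  have car: "M \<in> carrier_mat 2 2" unfolding M_def carrier_mat_def mat_of_rows_list_def by simp
  have e00: "M $$ (0,0) = A" "M $$ (0,1) = B" "M $$ (1,0) = S*A" "M $$ (1,1) = S*B"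
    unfolding M_def A_def B_def S_def by (simp_all add: mat_of_rows_list_def)
  have e01: "M $$ (0,Suc 0) = B" "M $$ (Suc 0,0) = S*A" "M $$ (Suc 0,Suc 0) = S*B"
    unfolding M_def A_def B_def S_def by (simp_all add: mat_of_rows_list_def)
  have mv: "M *\<^sub>v v = vec_of_list [A * vec_index v 0 + B * vec_index v 1, S * (A * vec_index v 0 + B * vec_index v 1)]"
    if v2: "v \<in> carrier_vec 2" for v
  proof -
    have "vec_index (M *\<^sub>v v) i = vec_index (vec_of_list [A * vec_index v 0 + B * vec_index v 1, S * (A * vec_index v 0 + B * vec_index v 1)]) i" if "i < 2" for i
    proof -
      have "vec_index (M *\<^sub>v v) i = M $$ (i,0) * vec_index v 0 + M $$ (i,1) * vec_index v 1"
        using that car v2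
        by (simp add: mult_mat_vec_def scalar_prod_def numeral_2_eq_2 row_def)
      note h = this
      show ?thesis
      proof (cases "i = 0")
        case True then show ?thesis using h by (simp add: e00 e01 algebra_simps)
      next
        case False then have "i = 1" using \<open>i < 2\<close> by simp
        then show ?thesis using h by (simp add: e00 e01 algebra_simps)
      qed
    qed
    then show ?thesis using car that by (intro eq_vecI) auto
  qed
  have dM: "dim_row M = 2" using car by auto
  have w2: "vec_of_list [1, S] \<in> carrier_vec 2" unfolding carrier_vec_def by simp
  have w0: "vec_of_list [1, S] \<noteq> 0\<^sub>v 2"
  proof
    assume "vec_of_list [1, S] = 0\<^sub>v 2"
    then have "vec_index (vec_of_list [1, S]) 0 = vec_index (0\<^sub>v 2) 0" by simp
    then show False by simp
  qed
  have wM: "M *\<^sub>v vec_of_list [1, S] = complex_of_real (a + s*b) \<cdot>\<^sub>v vec_of_list [1, S]"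
    unfolding mv[OF w2]
  proof (rule eq_vecI)
    show "dim_vec (vec_of_list [A * vec_index (vec_of_list [1, S]) 0 + B * vec_index (vec_of_list [1, S]) 1,
          S * (A * vec_index (vec_of_list [1, S]) 0 + B * vec_index (vec_of_list [1, S]) 1)]) =
        dim_vec (complex_of_real (a + s * b) \<cdot>\<^sub>v vec_of_list [1, S])" by simp
    fix i assume "i < dim_vec (complex_of_real (a + s * b) \<cdot>\<^sub>v vec_of_list [1, S])"
    then have "i = 0 \<or> i = 1" by auto
    then show "vec_index (vec_of_list [A * vec_index (vec_of_list [1, S]) 0 + B * vec_index (vec_of_list [1, S]) 1,
          S * (A * vec_index (vec_of_list [1, S]) 0 + B * vec_index (vec_of_list [1, S]) 1)]) i =
        vec_index (complex_of_real (a + s * b) \<cdot>\<^sub>v vec_of_list [1, S]) i"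
      by (elim disjE) (simp_all add: A_def B_def S_def algebra_simps)
  qed
  have tr: "complex_of_real (a + s*b) \<in> spectrum M"
    unfolding spectrum_def eigenvalue_def eigenvector_def dM using w2 w0 wM by blast
  have sub: "e = 0 \<or> e = complex_of_real (a + s*b)" if "e \<in> spectrum M" for e
  proof (rule ccontr)
    assume ne: "\<not> (e = 0 \<or> e = complex_of_real (a + s*b))"
    from that obtain v where v: "v \<in> carrier_vec 2" "v \<noteq> 0\<^sub>v 2" "M *\<^sub>v v = e \<cdot>\<^sub>v v"
      unfolding spectrum_def eigenvalue_def eigenvector_def using car by auto
    define r where "r = A * vec_index v 0 + B * vec_index v 1"
    have 1: "e * vec_index v 0 = r" "e * vec_index v 1 = S * r"
      using arg_cong[OF v(3), of "\<lambda>w. vec_index w 0"] arg_cong[OF v(3), of "\<lambda>w. vec_index w 1"] v(1)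
      by (auto simp: mv r_def)
    have "r \<noteq> 0"
    proof
      assume "r = 0"
      then have "vec_index v 0 = 0" "vec_index v 1 = 0" using 1 ne by auto
      then have "v = 0\<^sub>v 2" using v(1) by (intro eq_vecI) (auto simp: less_2_cases_iff)
      then show False using v(2) by simp
    qed
    have "e * r = A * (e * vec_index v 0) + B * (e * vec_index v 1)" by (simp add: r_def algebra_simps)
    also have "\<dots> = (A + S * B) * r" using 1 by (simp add: algebra_simps)
    finally have "e * r = (A + S * B) * r" .
    then have "e = A + S * B" using \<open>r \<noteq> 0\<close> by simp
    then show False using ne by (simp add: A_def B_def S_def)
  qed
  have fin: "finite (spectrum M)" using card_finite_spectrum[OF car] by simp
  have "Max (norm ` spectrum M) = a + s*b"
  proof (rule Max_eqI)
    show "finite (norm ` spectrum M)" using fin by simp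
    have nn: "0 \<le> a + s*b" using assms by simp
    have nr: "norm (complex_of_real (a+s*b)) = a+s*b" by (metis norm_of_real abs_of_nonneg nn)
    show "y \<le> a + s*b" if "y \<in> norm ` spectrum M" for y
    proof -
      from that obtain e where e: "e \<in> spectrum M" "y = norm e" by auto
      from sub[OF e(1)] show ?thesis
      proof
        assume "e = 0" then show ?thesis using e nn by simp
      next
        assume "e = complex_of_real (a+s*b)" then show ?thesis using e nr by simp
      qed
    qed
    show "a + s*b \<in> norm ` spectrum M" using tr nr by (metis image_eqI)
  qed
  then show ?thesis unfolding spectral_radius_def M_def .
qed

lemma infnorm_le_cart: "infnorm (x::real^'n) \<le> B \<longleftrightarrow> (\<forall>i. \<bar>x$i\<bar> \<le> B)"
proof
  assume "infnorm x \<le> B" then show "\<forall>i. \<bar>x$i\<bar> \<le> B"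
    using component_le_infnorm_cart order_trans by blast
next
  assume A: "\<forall>i. \<bar>x$i\<bar> \<le> B"
  have "infnorm x = Sup {\<bar>x$i\<bar> |i. i\<in>UNIV}" by (rule infnorm_cart)
  also have "\<dots> \<le> B" using A by (intro cSup_least) auto
  finally show "infnorm x \<le> B" .
qed

lemma sigmoid_pos: "0 < sigmoid w"
  unfolding sigmoid_def by (simp add: add_pos_pos)

lemma sigmoid_lt1: "sigmoid w < 1"
proof -
  have p: "0 < 1 + exp (-w)" by (simp add: add_pos_pos)
  then show ?thesis unfolding sigmoid_def by (simp add: field_simps)
qed

lemma sigmoid_mono: "w \<le> w' \<Longrightarrow> sigmoid w \<le> sigmoid w'"
  unfolding sigmoid_def by (intro divide_left_mono) (auto simp: add_pos_pos)

lemma tanh_le_self: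
  assumes "0 \<le> x" shows "tanh x \<le> (x::real)"
proof -
  have "(\<lambda>y. y - tanh y) 0 \<le> (\<lambda>y. y - tanh y) x"
  proof (rule DERIV_nonneg_imp_increasing_open[OF assms])
    fix y :: real
    have "((\<lambda>y. y - tanh y) has_real_derivative 1 - (1 - tanh y ^ 2)) (at y)"
      by (intro derivative_eq_intros) auto
    then show "\<exists>d. ((\<lambda>y. y - tanh y) has_real_derivative d) (at y) \<and> 0 \<le> d" by force
  next
    show "continuous_on {0..x} (\<lambda>y. y - tanh y)"
      by (intro continuous_intros) auto
  qed
  then show ?thesis by simp
qed

lemma abs_tanh_le: "\<bar>tanh x\<bar> \<le> \<bar>x::real\<bar>"
  using tanh_le_self[of "\<bar>x\<bar>"] by simp

lemma abs_tanh_le1: "\<bar>tanh (x::real)\<bar> \<le> 1"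
  using tanh_real_bounds[of x] by auto

lemma norm_hadamard_le:
  assumes "\<forall>i. \<bar>u$i\<bar> \<le> B" shows "norm (hadamard u v) \<le> B * norm v"
proof -
  have B0: "0 \<le> B" using assms[rule_format, of undefined] by linarith
  have "norm (hadamard u v) \<le> norm (B *\<^sub>R v)"
  proof (rule norm_le_componentwise_cart)
    fix i
    have "\<bar>u$i\<bar> * \<bar>v$i\<bar> \<le> B * \<bar>v$i\<bar>" using assms by (intro mult_right_mono) auto
    then show "norm (hadamard u v $ i) \<le> norm ((B *\<^sub>R v) $ i)"
      using B0 by (simp add: hadamard_def abs_mult)
  qed
  then show ?thesis using B0 by simp
qed

lemma norm_vtanh_le: "norm (vtanh v) \<le> norm v"
  by (rule norm_le_componentwise_cart) (simp add: vtanh_def abs_tanh_le)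

lemma abs_row_sum_nonneg: "0 \<le> abs_row_sum M i"
  unfolding abs_row_sum_def by (simp add: sum_nonneg)

lemma mv_comp_bound:
  assumes "\<forall>j. \<bar>x$j\<bar> \<le> B"
  shows "\<bar>(M *v x)$i\<bar> \<le> B * abs_row_sum M i"
proof -
  have "\<bar>(M *v x)$i\<bar> = \<bar>\<Sum>j\<in>UNIV. M$i$j * x$j\<bar>" by (simp add: matrix_vector_mult_def)
  also have "\<dots> \<le> (\<Sum>j\<in>UNIV. \<bar>M$i$j\<bar> * B)"
  proof (rule order_trans[OF sum_abs], rule sum_mono)
    fix j
    show "\<bar>M$i$j * x$j\<bar> \<le> \<bar>M$i$j\<bar> * B"
      unfolding abs_mult using assms by (intro mult_left_mono) auto
  qed
  also have "\<dots> = B * abs_row_sum M i"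
    by (simp add: abs_row_sum_def sum_distrib_left mult.commute)
  finally show ?thesis .
qed

lemma Wterm_nonneg: "0 \<le> xmax \<Longrightarrow> 0 \<le> Wterm P xmax l g i"
  unfolding Wterm_def by (auto intro!: mult_nonneg_nonneg abs_row_sum_nonneg)

definition pre :: "('x::finite, 'c::finite) lstm \<Rightarrow> nat \<Rightarrow> (gate \<Rightarrow> real^'c) \<Rightarrow> real^'c \<Rightarrow> gate \<Rightarrow> real^'c" where
  "pre P l wx h g = wx g + lstm_U P l g *v h + lstm_b P l g"

lemma cell_fst: "fst (cell P l wx s) =
   hadamard (vsig (pre P l wx (snd s) Fg)) (fst s) + hadamard (vsig (pre P l wx (snd s) Ig)) (vtanh (pre P l wx (snd s) Cg))"
  by (simp add: cell_def Let_def pre_def)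

lemma cell_snd: "snd (cell P l wx s) = hadamard (vsig (pre P l wx (snd s) Og)) (vtanh (fst (cell P l wx s)))"
  by (simp add: cell_def Let_def pre_def)

lemma pre_bounds:
  assumes xm: "0 \<le> xmax" and hw: "\<forall>g i. \<bar>wx g $ i\<bar> \<le> Wterm P xmax l g i" and hh: "infnorm h \<le> \<eta>"
  shows "g \<noteq> Cg \<Longrightarrow> pre P l wx h g $ i \<le> Gfun P xmax l g \<eta>"
    and "\<bar>pre P l wx h Cg $ i\<bar> \<le> Gfun P xmax l Cg \<eta>"
proof -
  have hb: "\<forall>j. \<bar>h$j\<bar> \<le> \<eta>" using hh infnorm_le_cart by blast
  have u: "\<bar>(lstm_U P l g' *v h)$i\<bar> \<le> \<eta> * abs_row_sum (lstm_U P l g') i" for g'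
    by (rule mv_comp_bound[OF hb])
  have pe: "pre P l wx h g' $ i = wx g' $ i + (lstm_U P l g' *v h)$i + lstm_b P l g' $ i" for g'
    by (simp add: pre_def)
  {
    assume g: "g \<noteq> Cg"
    define v where "v = (\<chi> i. max 0 (Wterm P xmax l g i + \<eta> * abs_row_sum (lstm_U P l g) i + lstm_b P l g $ i))"
    have "pre P l wx h g $ i \<le> Wterm P xmax l g i + \<eta> * abs_row_sum (lstm_U P l g) i + lstm_b P l g $ i"
      unfolding pe using hw[rule_format, of g i] u[of g] by linarith
    also have "\<dots> \<le> \<bar>v $ i\<bar>" unfolding v_def by simp
    also have "\<dots> \<le> infnorm v" by (rule component_le_infnorm_cart)
    also have "\<dots> = Gfun P xmax l g \<eta>" using g by (simp add: Gfun_def v_def)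
    finally show "pre P l wx h g $ i \<le> Gfun P xmax l g \<eta>" .
  }
  define v where "v = (\<chi> i. Wterm P xmax l Cg i + \<eta> * abs_row_sum (lstm_U P l Cg) i + \<bar>lstm_b P l Cg $ i\<bar>)"
  have "\<bar>pre P l wx h Cg $ i\<bar> \<le> Wterm P xmax l Cg i + \<eta> * abs_row_sum (lstm_U P l Cg) i + \<bar>lstm_b P l Cg $ i\<bar>"
    unfolding pe using hw[rule_format, of Cg i] u[of Cg] by linarith
  also have "\<dots> \<le> \<bar>v $ i\<bar>" unfolding v_def by simp
  also have "\<dots> \<le> infnorm v" by (rule component_le_infnorm_cart)
  also have "\<dots> = Gfun P xmax l Cg \<eta>" by (simp add: Gfun_def v_def)
  finally show "\<bar>pre P l wx h Cg $ i\<bar> \<le> Gfun P xmax l Cg \<eta>" .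
qed

lemma Gfun_nonneg: "0 \<le> Gfun P xmax l g \<eta>"
  unfolding Gfun_def by (simp add: infnorm_pos_le)

lemma Gfun_mono:
  assumes xm: "0 \<le> xmax" and e: "0 \<le> \<eta>" "\<eta> \<le> \<eta>'"
  shows "Gfun P xmax l g \<eta> \<le> Gfun P xmax l g \<eta>'"
proof -
  have m: "\<eta> * abs_row_sum M i \<le> \<eta>' * abs_row_sum M i" for M :: "real^'c^'c" and i
    using e abs_row_sum_nonneg by (intro mult_right_mono) auto
  have m0: "0 \<le> \<eta> * abs_row_sum M i" for M :: "real^'c^'c" and i
    by (intro mult_nonneg_nonneg e(1) abs_row_sum_nonneg)
  have inm: "infnorm u \<le> infnorm v" if "\<forall>i. \<bar>u$i\<bar> \<le> \<bar>v$i\<bar>" for u v :: "real^'c"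
    unfolding infnorm_le_cart using that component_le_infnorm_cart order_trans by blast
  show ?thesis
  proof (cases "g = Cg")
    case True
    have "\<bar>Wterm P xmax l Cg i + \<eta> * abs_row_sum (lstm_U P l Cg) i + \<bar>lstm_b P l Cg $ i\<bar>\<bar>
       \<le> \<bar>Wterm P xmax l Cg i + \<eta>' * abs_row_sum (lstm_U P l Cg) i + \<bar>lstm_b P l Cg $ i\<bar>\<bar>" for i
      using m[of "lstm_U P l Cg" i] m0[of "lstm_U P l Cg" i] Wterm_nonneg[OF xm, of P l Cg i]
        abs_ge_zero[of "lstm_b P l Cg $ i"] by (smt (verit))
    then show ?thesis unfolding Gfun_def using True by (simp, intro inm) simp
  next
    case False
    have "\<bar>max 0 (Wterm P xmax l g i + \<eta> * abs_row_sum (lstm_U P l g) i + lstm_b P l g $ i)\<bar>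
       \<le> \<bar>max 0 (Wterm P xmax l g i + \<eta>' * abs_row_sum (lstm_U P l g) i + lstm_b P l g $ i)\<bar>" for i
      using m[of "lstm_U P l g" i] by auto
    then show ?thesis unfolding Gfun_def using False by (simp, intro inm) simp
  qed
qed

lemma sig_of_pos: "0 < sig_of P xmax l g \<eta>" and sig_of_lt1: "sig_of P xmax l g \<eta> < 1"
  unfolding sig_of_def by (rule sigmoid_pos, rule sigmoid_lt1)

lemma sig_of_mono: "0 \<le> xmax \<Longrightarrow> 0 \<le> \<eta> \<Longrightarrow> \<eta> \<le> \<eta>' \<Longrightarrow> sig_of P xmax l g \<eta> \<le> sig_of P xmax l g \<eta>'"
  unfolding sig_of_def by (intro sigmoid_mono Gfun_mono)

lemma cbar_of_nonneg: "0 \<le> cbar_of P xmax l \<eta>"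
  unfolding cbar_of_def using sig_of_pos[of P xmax l Ig \<eta>] sig_of_lt1[of P xmax l Fg \<eta>] Gfun_nonneg[of P xmax l Cg \<eta>]
  by simp

lemma cbar_of_mono:
  assumes "0 \<le> xmax" "0 \<le> \<eta>" "\<eta> \<le> \<eta>'"
  shows "cbar_of P xmax l \<eta> \<le> cbar_of P xmax l \<eta>'"
proof -
  have a: "sig_of P xmax l Ig \<eta> * tanh (Gfun P xmax l Cg \<eta>) \<le> sig_of P xmax l Ig \<eta>' * tanh (Gfun P xmax l Cg \<eta>')"
    using sig_of_mono[OF assms, of P l Ig] Gfun_mono[OF assms, of P l Cg] sig_of_pos[of P xmax l Ig \<eta>]
      Gfun_nonneg[of P xmax l Cg \<eta>]
    by (intro mult_mono) auto
  have b: "0 \<le> sig_of P xmax l Ig \<eta>' * tanh (Gfun P xmax l Cg \<eta>')"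
    using sig_of_pos[of P xmax l Ig \<eta>'] Gfun_nonneg[of P xmax l Cg \<eta>'] by simp
  show ?thesis unfolding cbar_of_def
    using sig_of_mono[OF assms, of P l Fg] sig_of_lt1[of P xmax l Fg \<eta>']
    by (intro frac_le[OF b a]) auto
qed

lemma eta_prev_nonneg: "0 \<le> eta_prev P xmax l k"
  by (cases k) (auto intro!: mult_nonneg_nonneg less_imp_le[OF sig_of_pos] simp: cbar_of_nonneg)

lemma eta_prev_dec:
  assumes "0 \<le> xmax" shows "eta_prev P xmax l (Suc k) \<le> eta_prev P xmax l k"
proof (induction k)
  case 0
  have "tanh (cbar_of P xmax l 1) * sig_of P xmax l Og 1 \<le> 1 * 1"
    using abs_tanh_le1[of "cbar_of P xmax l 1"] sig_of_lt1[of P xmax l Og 1] sig_of_pos[of P xmax l Og 1]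
      cbar_of_nonneg[of P xmax l 1]
    by (intro mult_mono) auto
  then show ?case by simp
next
  case (Suc k)
  let ?e = "eta_prev P xmax l"
  have "tanh (cbar_of P xmax l (?e (Suc k))) * sig_of P xmax l Og (?e (Suc k))
      \<le> tanh (cbar_of P xmax l (?e k)) * sig_of P xmax l Og (?e k)"
    using cbar_of_mono[OF assms eta_prev_nonneg Suc.IH] sig_of_mono[OF assms eta_prev_nonneg Suc.IH]
      cbar_of_nonneg sig_of_pos[of P xmax l Og "?e (Suc k)"]
    by (intro mult_mono) auto
  then show ?case by simp
qed

lemma vsig_bound:
  assumes xm: "0 \<le> xmax" and hw: "\<forall>g i. \<bar>wx g $ i\<bar> \<le> Wterm P xmax l g i" and hh: "infnorm h \<le> \<eta>"
    and g: "g \<noteq> Cg"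
  shows "\<bar>vsig (pre P l wx h g) $ i\<bar> \<le> sig_of P xmax l g \<eta>"
proof -
  have "\<bar>vsig (pre P l wx h g) $ i\<bar> = sigmoid (pre P l wx h g $ i)"
    using sigmoid_pos[of "pre P l wx h g $ i"] by (simp add: vsig_def)
  also have "\<dots> \<le> sig_of P xmax l g \<eta>"
    unfolding sig_of_def by (rule sigmoid_mono[OF pre_bounds(1)[OF xm hw hh g]])
  finally show ?thesis .
qed

lemma vtanh_bound:
  assumes xm: "0 \<le> xmax" and hw: "\<forall>g i. \<bar>wx g $ i\<bar> \<le> Wterm P xmax l g i" and hh: "infnorm h \<le> \<eta>"
  shows "\<bar>vtanh (pre P l wx h Cg) $ i\<bar> \<le> tanh (Gfun P xmax l Cg \<eta>)"
proof -
  have 1: "\<bar>pre P l wx h Cg $ i\<bar> \<le> Gfun P xmax l Cg \<eta>" by (rule pre_bounds(2)[OF xm hw hh])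
  have 2: "tanh \<bar>pre P l wx h Cg $ i\<bar> \<le> tanh (Gfun P xmax l Cg \<eta>)" using 1 by (simp only: tanh_real_le_iff)
  then show ?thesis by (simp add: vtanh_def)
qed

lemma cell_inv:
  assumes xm: "0 \<le> xmax" and hw: "\<forall>g i. \<bar>wx g $ i\<bar> \<le> Wterm P xmax l g i"
    and hh: "infnorm (snd s) \<le> \<eta>" and hc: "infnorm (fst s) \<le> cbar_of P xmax l \<eta>"
  shows "infnorm (fst (cell P l wx s)) \<le> cbar_of P xmax l \<eta>"
    and "infnorm (snd (cell P l wx s)) \<le> tanh (cbar_of P xmax l \<eta>) * sig_of P xmax l Og \<eta>"
proof -
  define sf si so T C where "sf = sig_of P xmax l Fg \<eta>" and "si = sig_of P xmax l Ig \<eta>"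
    and "so = sig_of P xmax l Og \<eta>" and "T = tanh (Gfun P xmax l Cg \<eta>)" and "C = cbar_of P xmax l \<eta>"
  have sf1: "sf < 1" unfolding sf_def by (rule sig_of_lt1)
  have T0: "0 \<le> T" unfolding T_def using Gfun_nonneg by simp
  have si0: "0 < si" unfolding si_def by (rule sig_of_pos)
  have C0: "0 \<le> C" unfolding C_def by (rule cbar_of_nonneg)
  have Ceq: "sf * C + si * T = C"
    using sf1 unfolding C_def cbar_of_def sf_def[symmetric] si_def[symmetric] T_def[symmetric]
    by (simp add: field_simps)
  have cb: "\<forall>i. \<bar>fst s $ i\<bar> \<le> C" using hc infnorm_le_cart unfolding C_def by blast
  have c': "\<bar>fst (cell P l wx s) $ i\<bar> \<le> C" for i
  proof -
    have e: "fst (cell P l wx s) $ i = vsig (pre P l wx (snd s) Fg) $ i * fst s $ i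
        + vsig (pre P l wx (snd s) Ig) $ i * vtanh (pre P l wx (snd s) Cg) $ i"
      by (simp add: cell_fst hadamard_def)
    have a: "\<bar>vsig (pre P l wx (snd s) Fg) $ i\<bar> \<le> sf" unfolding sf_def by (rule vsig_bound[OF xm hw hh]) simp
    have b: "\<bar>vsig (pre P l wx (snd s) Ig) $ i\<bar> \<le> si" unfolding si_def by (rule vsig_bound[OF xm hw hh]) simp
    have c: "\<bar>vtanh (pre P l wx (snd s) Cg) $ i\<bar> \<le> T" unfolding T_def by (rule vtanh_bound[OF xm hw hh])
    have "\<bar>fst (cell P l wx s) $ i\<bar> \<le> \<bar>vsig (pre P l wx (snd s) Fg) $ i\<bar> * \<bar>fst s $ i\<bar>
        + \<bar>vsig (pre P l wx (snd s) Ig) $ i\<bar> * \<bar>vtanh (pre P l wx (snd s) Cg) $ i\<bar>"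
      unfolding e abs_mult[symmetric] by (rule abs_triangle_ineq)
    also have "\<dots> \<le> sf * C + si * T"
      using a b c cb[rule_format, of i] by (intro add_mono mult_mono) auto
    finally show ?thesis using Ceq by simp
  qed
  then show "infnorm (fst (cell P l wx s)) \<le> cbar_of P xmax l \<eta>"
    unfolding infnorm_le_cart C_def by blast
  have "\<bar>snd (cell P l wx s) $ i\<bar> \<le> tanh C * so" for i
  proof -
    have e: "snd (cell P l wx s) $ i = vsig (pre P l wx (snd s) Og) $ i * tanh (fst (cell P l wx s) $ i)"
      by (simp add: cell_snd hadamard_def vtanh_def)
    have a: "\<bar>vsig (pre P l wx (snd s) Og) $ i\<bar> \<le> so" unfolding so_def by (rule vsig_bound[OF xm hw hh]) simp
    have b: "\<bar>tanh (fst (cell P l wx s) $ i)\<bar> \<le> tanh C"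
      using c'[of i] tanh_real_abs[of "fst (cell P l wx s) $ i"] by (metis tanh_real_le_iff)
    have "\<bar>snd (cell P l wx s) $ i\<bar> \<le> so * tanh C"
      unfolding e abs_mult using a b by (intro mult_mono) auto
    then show ?thesis by (simp add: mult.commute)
  qed
  then show "infnorm (snd (cell P l wx s)) \<le> tanh (cbar_of P xmax l \<eta>) * sig_of P xmax l Og \<eta>"
    unfolding infnorm_le_cart C_def so_def by blast
qed

lemma cell_norm:
  assumes xm: "0 \<le> xmax" and hw: "\<forall>g i. \<bar>wx g $ i\<bar> \<le> Wterm P xmax l g i"
    and hh: "infnorm (snd s) \<le> \<eta>"
  shows "norm (fst (cell P l wx s)) \<le> sig_of P xmax l Fg \<eta> * norm (fst s)
           + sig_of P xmax l Ig \<eta> * (norm (wx Cg) + onorm ((*v) (lstm_U P l Cg)) * norm (snd s) + norm (lstm_b P l Cg))"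
    and "norm (snd (cell P l wx s)) \<le> sig_of P xmax l Og \<eta> * norm (fst (cell P l wx s))"
proof -
  have np: "norm (pre P l wx (snd s) Cg) \<le> norm (wx Cg) + onorm ((*v) (lstm_U P l Cg)) * norm (snd s) + norm (lstm_b P l Cg)"
  proof -
    have "norm (pre P l wx (snd s) Cg) \<le> norm (wx Cg) + norm (lstm_U P l Cg *v snd s) + norm (lstm_b P l Cg)"
    proof -
      have t1: "norm (wx Cg + lstm_U P l Cg *v snd s + lstm_b P l Cg) \<le> norm (wx Cg + lstm_U P l Cg *v snd s) + norm (lstm_b P l Cg)"
        by (rule norm_triangle_ineq)
      have t2: "norm (wx Cg + lstm_U P l Cg *v snd s) \<le> norm (wx Cg) + norm (lstm_U P l Cg *v snd s)"
        by (rule norm_triangle_ineq)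
      show ?thesis unfolding pre_def using t1 t2 by linarith
    qed
    moreover have "norm (lstm_U P l Cg *v snd s) \<le> onorm ((*v) (lstm_U P l Cg)) * norm (snd s)"
      by (rule onorm[OF matrix_vector_mul_bounded_linear])
    ultimately show ?thesis by linarith
  qed
  have "norm (fst (cell P l wx s)) \<le> norm (hadamard (vsig (pre P l wx (snd s) Fg)) (fst s))
      + norm (hadamard (vsig (pre P l wx (snd s) Ig)) (vtanh (pre P l wx (snd s) Cg)))"
    unfolding cell_fst by (rule norm_triangle_ineq)
  also have "\<dots> \<le> sig_of P xmax l Fg \<eta> * norm (fst s) + sig_of P xmax l Ig \<eta> * norm (vtanh (pre P l wx (snd s) Cg))"
    by (intro add_mono norm_hadamard_le allI vsig_bound[OF xm hw hh]) auto
  also have "\<dots> \<le> sig_of P xmax l Fg \<eta> * norm (fst s) + sig_of P xmax l Ig \<eta> * norm (pre P l wx (snd s) Cg)"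
    using norm_vtanh_le sig_of_pos[of P xmax l Ig \<eta>] by (intro add_mono[OF order_refl] mult_left_mono) auto
  also have "\<dots> \<le> sig_of P xmax l Fg \<eta> * norm (fst s)
           + sig_of P xmax l Ig \<eta> * (norm (wx Cg) + onorm ((*v) (lstm_U P l Cg)) * norm (snd s) + norm (lstm_b P l Cg))"
    using np sig_of_pos[of P xmax l Ig \<eta>] by (intro add_mono[OF order_refl] mult_left_mono) auto
  finally show "norm (fst (cell P l wx s)) \<le> sig_of P xmax l Fg \<eta> * norm (fst s)
           + sig_of P xmax l Ig \<eta> * (norm (wx Cg) + onorm ((*v) (lstm_U P l Cg)) * norm (snd s) + norm (lstm_b P l Cg))" .
  have "norm (snd (cell P l wx s)) \<le> sig_of P xmax l Og \<eta> * norm (vtanh (fst (cell P l wx s)))"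
    unfolding cell_snd by (intro norm_hadamard_le allI vsig_bound[OF xm hw hh]) auto
  also have "\<dots> \<le> sig_of P xmax l Og \<eta> * norm (fst (cell P l wx s))"
    using norm_vtanh_le sig_of_pos[of P xmax l Og \<eta>] by (intro mult_left_mono) auto
  finally show "norm (snd (cell P l wx s)) \<le> sig_of P xmax l Og \<eta> * norm (fst (cell P l wx s))" .
qed

definition wxf :: "('x::finite, 'c::finite) lstm \<Rightarrow> real^'x \<Rightarrow> (nat \<Rightarrow> (real^'c) \<times> (real^'c)) \<Rightarrow> nat \<Rightarrow> gate \<Rightarrow> real^'c" where
  "wxf P xt S l = (if l = 1 then (\<lambda>g. lstm_W1 P g *v xt) else (\<lambda>g. lstm_W P l g *v snd (new_state P xt S (l - 1))))"

lemma new_state_cell: "1 \<le> l \<Longrightarrow> new_state P xt S l = cell P l (wxf P xt S l) (S l)"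
  by (cases l) (auto simp: wxf_def)

lemma new_state_h_bound: "1 \<le> l \<Longrightarrow> \<bar>snd (new_state P xt S l) $ j\<bar> \<le> 1"
proof -
  assume l: "1 \<le> l"
  have "\<bar>snd (new_state P xt S l) $ j\<bar> = \<bar>vsig (pre P l (wxf P xt S l) (snd (S l)) Og) $ j\<bar> * \<bar>tanh (fst (new_state P xt S l) $ j)\<bar>"
    unfolding new_state_cell[OF l] cell_snd by (simp add: hadamard_def vtanh_def abs_mult)
  also have "\<dots> \<le> 1 * 1"
    using sigmoid_pos sigmoid_lt1 abs_tanh_le1 by (intro mult_mono) (auto simp: vsig_def less_imp_le)
  finally show ?thesis by simp
qed

lemma wxf_bound:
  assumes xm: "0 \<le> xmax" and xb: "\<forall>i. \<bar>xt $ i\<bar> \<le> xmax" and l: "1 \<le> l"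
  shows "\<forall>g i. \<bar>wxf P xt S l g $ i\<bar> \<le> Wterm P xmax l g i"
proof (intro allI)
  fix g i
  show "\<bar>wxf P xt S l g $ i\<bar> \<le> Wterm P xmax l g i"
  proof (cases "l = 1")
    case True
    then show ?thesis unfolding wxf_def Wterm_def using mv_comp_bound[OF xb] by simp
  next
    case False
    then have "1 \<le> l - 1" using l by simp
    then have "\<forall>j. \<bar>snd (new_state P xt S (l - 1)) $ j\<bar> \<le> 1" using new_state_h_bound by blast
    from mv_comp_bound[OF this, of "lstm_W P l g" i]
    show ?thesis unfolding wxf_def Wterm_def using False by simp
  qed
qed

definition nW :: "('x::finite, 'c::finite) lstm \<Rightarrow> nat \<Rightarrow> real" where
  "nW P l = (if l = 1 then onorm ((*v) (lstm_W1 P Cg)) else onorm ((*v) (lstm_W P l Cg)))"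

lemma nW_nonneg: "0 \<le> nW P l"
  unfolding nW_def by (simp add: onorm_pos_le)

lemma wxf_norm: "norm (wxf P xt S l Cg) \<le> nW P l * (if l = 1 then norm xt else norm (snd (new_state P xt S (l - 1))))"
  unfolding wxf_def nW_def by (simp add: onorm[OF matrix_vector_mul_bounded_linear])

lemma Sset_iff: "s \<in> Sset P xmax l k \<longleftrightarrow>
   infnorm (fst s) \<le> cbar_of P xmax l (eta_prev P xmax l k) \<and> infnorm (snd s) \<le> eta_prev P xmax l (Suc k)"
  by (cases s) (simp add: Sset_def cbar_def sigbar_def)

lemma traj_inv:
  assumes xm: "0 \<le> xmax" and s0: "\<forall>l\<in>{1..L}. s0 l \<in> Sset P xmax l k"
    and xb: "\<forall>\<tau> i. \<bar>x \<tau> $ i\<bar> \<le> xmax"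
  shows "\<forall>l\<in>{1..L}. traj P s0 x t l \<in> Sset P xmax l k"
proof (induction t)
  case 0 then show ?case using s0 by simp
next
  case (Suc t)
  show ?case
  proof
    fix l assume l: "l \<in> {1..L}"
    let ?S = "traj P s0 x t"
    let ?e = "eta_prev P xmax l k"
    have I: "infnorm (fst (?S l)) \<le> cbar_of P xmax l ?e" "infnorm (snd (?S l)) \<le> eta_prev P xmax l (Suc k)"
      using Suc.IH l Sset_iff by blast+
    have hh: "infnorm (snd (?S l)) \<le> ?e" using I(2) eta_prev_dec[OF xm] order_trans by blast
    have hw: "\<forall>g i. \<bar>wxf P (x t) ?S l g $ i\<bar> \<le> Wterm P xmax l g i"
      using wxf_bound[OF xm _, of "x t" l P ?S] xb l by simp
    have eq: "traj P s0 x (Suc t) l = cell P l (wxf P (x t) ?S l) (?S l)"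
      using new_state_cell[of l P "x t" ?S] l by simp
    show "traj P s0 x (Suc t) l \<in> Sset P xmax l k"
      unfolding eq Sset_iff using cell_inv[OF xm hw hh I(1)] by simp
  qed
qed

definition nU :: "('x::finite, 'c::finite) lstm \<Rightarrow> nat \<Rightarrow> real" where
  "nU P l = onorm ((*v) (lstm_U P l Cg))"

lemma nU_nonneg: "0 \<le> nU P l"
  unfolding nU_def by (simp add: onorm_pos_le)

definition rho :: "('x::finite, 'c::finite) lstm \<Rightarrow> real \<Rightarrow> nat \<Rightarrow> nat \<Rightarrow> real" where
  "rho P xmax k l = sig_of P xmax l Fg (eta_prev P xmax l k)
     + sig_of P xmax l Og (eta_prev P xmax l k) * (sig_of P xmax l Ig (eta_prev P xmax l k) * nU P l)"

lemma rho_nonneg: "0 \<le> rho P xmax k l"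
proof -
  have "0 \<le> sig_of P xmax l g \<eta>" for g \<eta> using sig_of_pos[of P xmax l g \<eta>] by simp
  then show ?thesis unfolding rho_def using nU_nonneg[of P l]
    by (intro add_nonneg_nonneg mult_nonneg_nonneg) auto
qed

lemma geo:
  fixes m :: "nat \<Rightarrow> real"
  assumes r0: "0 \<le> r" and rmu: "r < \<mu>" and mu1: "\<mu> < 1" and A0: "0 \<le> A" and B0: "0 \<le> B" and m0: "0 \<le> m 0"
    and step: "\<And>t. t < T \<Longrightarrow> m (Suc t) \<le> r * m t + A * \<mu>^t + B"
  shows "t \<le> T \<Longrightarrow> m t \<le> (m 0 + A/(\<mu> - r)) * \<mu>^t + B/(1-r)"
proof (induction t)
  case 0
  have "0 \<le> A/(\<mu>-r)" "0 \<le> B/(1-r)" using A0 B0 rmu mu1 r0 by auto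
  then show ?case by simp
next
  case (Suc t)
  define D where "D = m 0 + A/(\<mu>-r)"
  define E where "E = B/(1-r)"
  have tT: "t \<le> T" "t < T" using Suc.prems by auto
  have IH: "m t \<le> D*\<mu>^t + E" using Suc.IH[OF tT(1)] by (simp add: D_def E_def)
  have mu0: "0 < \<mu>" using r0 rmu by linarith
  have DA: "r*D + A \<le> \<mu>*D"
  proof -
    have ne: "\<mu> - r \<noteq> 0" using rmu by simp
    have "\<mu>*D - r*D = (\<mu>-r)*D" by (simp add: algebra_simps)
    also have "\<dots> = (\<mu>-r)*m 0 + (\<mu>-r)*(A/(\<mu>-r))" unfolding D_def by (rule distrib_left)
    also have "(\<mu>-r)*(A/(\<mu>-r)) = A" using ne by simp
    finally have "\<mu>*D - r*D = (\<mu>-r)*m 0 + A" .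
    moreover have "0 \<le> (\<mu>-r)*m 0" using rmu m0 by simp
    ultimately show ?thesis by linarith
  qed
  have EB: "r*E + B = E" using r0 rmu mu1 by (simp add: E_def field_simps)
  have "m (Suc t) \<le> r*m t + A*\<mu>^t + B" using step[OF tT(2)] .
  also have "\<dots> \<le> r*(D*\<mu>^t + E) + A*\<mu>^t + B" using IH r0 by (simp add: mult_left_mono)
  also have "\<dots> = (r*D + A)*\<mu>^t + (r*E + B)" by (simp add: algebra_simps)
  also have "\<dots> \<le> (\<mu>*D)*\<mu>^t + E" using DA EB mu0 by (simp add: mult_right_mono)
  also have "\<dots> = D*\<mu>^(Suc t) + E" by simp
  finally show ?case by (simp add: D_def E_def)
qed

lemma sum_sq_le:
  fixes f :: "'a \<Rightarrow> real"
  assumes "finite A" "\<forall>x\<in>A. 0 \<le> f x"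
  shows "(\<Sum>x\<in>A. (f x)\<^sup>2) \<le> (\<Sum>x\<in>A. f x)\<^sup>2"
  using assms
proof (induction A rule: finite_induct)
  case empty then show ?case by simp
next
  case (insert x F)
  have "0 \<le> f x * (\<Sum>x\<in>F. f x)" using insert.prems by (simp add: sum_nonneg)
  then show ?case using insert by (simp add: power2_eq_square algebra_simps)
qed

lemma state_norm_le_sum: "state_norm L S \<le> (\<Sum>l=1..L. norm (fst (S l)) + norm (snd (S l)))"
proof -
  have "(\<Sum>l=1..L. (norm (fst (S l)))\<^sup>2 + (norm (snd (S l)))\<^sup>2) \<le> (\<Sum>l=1..L. (norm (fst (S l)) + norm (snd (S l)))\<^sup>2)"
    by (intro sum_mono) (simp add: power2_eq_square algebra_simps)
  also have "\<dots> \<le> (\<Sum>l=1..L. norm (fst (S l)) + norm (snd (S l)))\<^sup>2"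
    by (rule sum_sq_le) auto
  finally have "state_norm L S \<le> sqrt ((\<Sum>l=1..L. norm (fst (S l)) + norm (snd (S l)))\<^sup>2)"
    unfolding state_norm_def by (rule real_sqrt_le_mono)
  also have "\<dots> = (\<Sum>l=1..L. norm (fst (S l)) + norm (snd (S l)))"
    by (simp add: sum_nonneg)
  finally show ?thesis .
qed

lemma state_norm_ge:
  assumes "l \<in> {1..L}"
  shows "norm (fst (S l)) \<le> state_norm L S" "norm (snd (S l)) \<le> state_norm L S"
proof -
  have "(norm (fst (S l)))\<^sup>2 + (norm (snd (S l)))\<^sup>2 \<le> (\<Sum>l=1..L. (norm (fst (S l)))\<^sup>2 + (norm (snd (S l)))\<^sup>2)"
    using assms by (intro member_le_sum) auto
  then have a: "(norm (fst (S l)))\<^sup>2 \<le> (\<Sum>l=1..L. (norm (fst (S l)))\<^sup>2 + (norm (snd (S l)))\<^sup>2)"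
     and b: "(norm (snd (S l)))\<^sup>2 \<le> (\<Sum>l=1..L. (norm (fst (S l)))\<^sup>2 + (norm (snd (S l)))\<^sup>2)"
    by (smt (verit) zero_le_power2)+
  show "norm (fst (S l)) \<le> state_norm L S" unfolding state_norm_def by (rule real_le_rsqrt[OF a])
  show "norm (snd (S l)) \<le> state_norm L S" unfolding state_norm_def by (rule real_le_rsqrt[OF b])
qed

lemma state_norm_nonneg: "0 \<le> state_norm L S"
  unfolding state_norm_def by (intro real_sqrt_ge_zero sum_nonneg) auto

lemma input_norm_ge:
  shows "norm xt \<le> input_norm P L xt"
    and "l \<in> {1..L} \<Longrightarrow> norm (lstm_b P l Cg) \<le> input_norm P L xt"
proof -
  have s0: "0 \<le> (\<Sum>l=1..L. (norm (lstm_b P l Cg))\<^sup>2)" by (simp add: sum_nonneg)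
  show "norm xt \<le> input_norm P L xt" unfolding input_norm_def
    by (rule real_le_rsqrt) (use s0 in simp)
  assume l: "l \<in> {1..L}"
  have "(norm (lstm_b P l Cg))\<^sup>2 \<le> (\<Sum>l=1..L. (norm (lstm_b P l Cg))\<^sup>2)"
    using l by (intro member_le_sum) auto
  then show "norm (lstm_b P l Cg) \<le> input_norm P L xt" unfolding input_norm_def
    by (intro real_le_rsqrt) (smt (verit) zero_le_power2)
qed

lemma input_sup_ge: "\<tau> \<le> T \<Longrightarrow> input_norm P L (x \<tau>) \<le> input_sup_norm P L x T"
  unfolding input_sup_norm_def by (intro Max_ge) auto

lemma input_sup_ge_x: "\<tau> \<le> T \<Longrightarrow> norm (x \<tau>) \<le> input_sup_norm P L x T"
  using input_norm_ge(1) input_sup_ge order_trans by blast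

lemma input_sup_ge_b: "l \<in> {1..L} \<Longrightarrow> norm (lstm_b P l Cg) \<le> input_sup_norm P L x T"
  using input_norm_ge(2)[of l L P "x 0"] input_sup_ge[of 0 T P L x] by simp

lemma input_sup_nonneg: "0 \<le> input_sup_norm P L x T"
  using input_sup_ge_x[of 0 T x P L] norm_ge_zero[of "x 0"] by linarith

definition mm :: "('x::finite, 'c::finite) lstm \<Rightarrow> real \<Rightarrow> nat \<Rightarrow> (nat \<Rightarrow> (real^'c) \<times> (real^'c)) \<Rightarrow> (nat \<Rightarrow> real^'x) \<Rightarrow> nat \<Rightarrow> nat \<Rightarrow> real" where
  "mm P xmax k s0 x l t = max (norm (fst (traj P s0 x t l))) (norm (snd (traj P s0 x t l)) / sig_of P xmax l Og (eta_prev P xmax l k))"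

lemma mm_nonneg: "0 \<le> mm P xmax k s0 x l t"
  unfolding mm_def by (rule order_trans[OF norm_ge_zero max.cobounded1])

lemma mm_ge:
  shows "norm (fst (traj P s0 x t l)) \<le> mm P xmax k s0 x l t"
    and "norm (snd (traj P s0 x t l)) \<le> sig_of P xmax l Og (eta_prev P xmax l k) * mm P xmax k s0 x l t"
proof -
  show "norm (fst (traj P s0 x t l)) \<le> mm P xmax k s0 x l t" unfolding mm_def by simp
  have so: "0 < sig_of P xmax l Og (eta_prev P xmax l k)" by (rule sig_of_pos)
  have "norm (snd (traj P s0 x t l)) / sig_of P xmax l Og (eta_prev P xmax l k) \<le> mm P xmax k s0 x l t"
    unfolding mm_def by simp
  then show "norm (snd (traj P s0 x t l)) \<le> sig_of P xmax l Og (eta_prev P xmax l k) * mm P xmax k s0 x l t"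
    using so by (simp add: divide_le_eq mult.commute)
qed

lemma mm_le_sum: "mm P xmax k s0 x l t \<le> norm (fst (traj P s0 x t l)) + norm (snd (traj P s0 x t l)) / sig_of P xmax l Og (eta_prev P xmax l k)"
  unfolding mm_def using sig_of_pos[of P xmax l Og "eta_prev P xmax l k"] by (simp add: max_def)

lemma mm_step:
  assumes xm: "0 \<le> xmax" and s0: "\<forall>l\<in>{1..L}. s0 l \<in> Sset P xmax l k"
    and xb: "\<forall>\<tau> i. \<bar>x \<tau> $ i\<bar> \<le> xmax" and l: "l \<in> {1..L}"
  shows "mm P xmax k s0 x l (Suc t) \<le> rho P xmax k l * mm P xmax k s0 x l t
     + sig_of P xmax l Ig (eta_prev P xmax l k) *
        (nW P l * (if l = 1 then norm (x t) else norm (snd (traj P s0 x (Suc t) (l - 1)))) + norm (lstm_b P l Cg))"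
proof -
  let ?S = "traj P s0 x t"
  let ?e = "eta_prev P xmax l k"
  define sf si so where "sf = sig_of P xmax l Fg ?e" and "si = sig_of P xmax l Ig ?e" and "so = sig_of P xmax l Og ?e"
  define m where "m = mm P xmax k s0 x l t"
  define inp where "inp = (if l = 1 then norm (x t) else norm (snd (traj P s0 x (Suc t) (l - 1))))"
  have sf0: "0 \<le> sf" and si0: "0 \<le> si" and so0: "0 < so"
    unfolding sf_def si_def so_def using sig_of_pos less_imp_le by blast+
  have I: "?S l \<in> Sset P xmax l k" using traj_inv[OF xm s0 xb] l by blast
  have hh: "infnorm (snd (?S l)) \<le> ?e"
    using I Sset_iff eta_prev_dec[OF xm] order_trans by blast
  have l1: "1 \<le> l" using l by simp
  have hw: "\<forall>g i. \<bar>wxf P (x t) ?S l g $ i\<bar> \<le> Wterm P xmax l g i"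
    using wxf_bound[OF xm _ l1, of "x t" P ?S] xb by simp
  have eq: "traj P s0 x (Suc t) l = cell P l (wxf P (x t) ?S l) (?S l)"
    using new_state_cell[OF l1, of P "x t" ?S] by simp
  have wn: "norm (wxf P (x t) ?S l Cg) \<le> nW P l * inp"
  proof -
    have e: "traj P s0 x (Suc t) (l - 1) = new_state P (x t) ?S (l - 1)" by simp
    show ?thesis unfolding inp_def e by (rule wxf_norm)
  qed
  note N1 = cell_norm(1)[OF xm hw hh, folded eq sf_def si_def nU_def]
  note N2 = cell_norm(2)[OF xm hw hh, folded eq so_def]
  have a: "norm (fst (?S l)) \<le> m" unfolding m_def by (rule mm_ge(1))
  have b: "norm (snd (?S l)) \<le> so * m" unfolding m_def so_def by (rule mm_ge(2))
  have "norm (fst (traj P s0 x (Suc t) l)) \<le> sf * norm (fst (?S l)) + si * (norm (wxf P (x t) ?S l Cg) + nU P l * norm (snd (?S l)) + norm (lstm_b P l Cg))"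
    by (rule N1)
  also have "\<dots> \<le> sf * m + si * (nW P l * inp + nU P l * (so * m) + norm (lstm_b P l Cg))"
    using a b wn sf0 si0 nU_nonneg[of P l]
    by (intro add_mono mult_left_mono order_refl) auto
  also have "\<dots> = rho P xmax k l * m + si * (nW P l * inp + norm (lstm_b P l Cg))"
    unfolding rho_def sf_def[symmetric] si_def[symmetric] so_def[symmetric] by (simp add: algebra_simps)
  finally have c: "norm (fst (traj P s0 x (Suc t) l)) \<le> rho P xmax k l * m + si * (nW P l * inp + norm (lstm_b P l Cg))" .
  have d: "norm (snd (traj P s0 x (Suc t) l)) / so \<le> norm (fst (traj P s0 x (Suc t) l))"
    using N2 so0 by (simp add: divide_le_eq mult.commute)
  show ?thesis
    unfolding mm_def[of P xmax k s0 x l "Suc t"] so_def[symmetric]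
    using c d by (simp add: m_def inp_def si_def)
qed

lemma cascade:
  fixes P :: "('x::finite, 'c::finite) lstm"
  assumes xm: "0 \<le> xmax" and rmu: "\<forall>l\<in>{1..L}. rho P xmax k l < \<mu>" and mu1: "\<mu> < 1"
  shows "Suc n \<le> L \<Longrightarrow> \<exists>K G. 0 \<le> K \<and> 0 \<le> G \<and>
    (\<forall>s0 x T t. (\<forall>l\<in>{1..L}. s0 l \<in> Sset P xmax l k) \<and> (\<forall>\<tau> i. \<bar>x \<tau> $ i\<bar> \<le> xmax) \<longrightarrow> t \<le> T \<longrightarrow>
      mm P xmax k s0 x (Suc n) t \<le> K * \<mu>^t * state_norm L s0 + G * input_sup_norm P L x T)"
proof (induction n)
  case 0
  let ?l = "Suc 0"
  have l: "?l \<in> {1..L}" using 0 by simp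
  define so si \<rho> where "so = sig_of P xmax ?l Og (eta_prev P xmax ?l k)"
    and "si = sig_of P xmax ?l Ig (eta_prev P xmax ?l k)" and "\<rho> = rho P xmax k ?l"
  have so0: "0 < so" and si0: "0 < si" unfolding so_def si_def by (rule sig_of_pos)+
  have r0: "0 \<le> \<rho>" unfolding \<rho>_def by (rule rho_nonneg)
  have rmu1: "\<rho> < \<mu>" using rmu l unfolding \<rho>_def by blast
  define K where "K = 1 + 1/so"
  define G where "G = si * (nW P ?l + 1) / (1 - \<rho>)"
  have K0: "0 \<le> K" using so0 by (simp add: K_def)
  have G0: "0 \<le> G" using si0 nW_nonneg[of P ?l] rmu1 mu1 by (simp add: G_def)
  show ?case
  proof (intro exI conjI allI impI)
    show "0 \<le> K" by (rule K0)
    show "0 \<le> G" by (rule G0)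
    fix s0 :: "nat \<Rightarrow> (real^'c) \<times> (real^'c)" and x :: "nat \<Rightarrow> real^'x" and T t :: nat
    assume V: "(\<forall>l\<in>{1..L}. s0 l \<in> Sset P xmax l k) \<and> (\<forall>\<tau> i. \<bar>x \<tau> $ i\<bar> \<le> xmax)" and tT: "t \<le> T"
    define U where "U = input_sup_norm P L x T"
    define S0 where "S0 = state_norm L s0"
    have U0: "0 \<le> U" unfolding U_def by (rule input_sup_nonneg)
    have step: "mm P xmax k s0 x ?l (Suc t') \<le> \<rho> * mm P xmax k s0 x ?l t' + 0 * \<mu>^t' + si*(nW P ?l + 1)*U"
      if "t' < T" for t'
    proof -
      have "mm P xmax k s0 x ?l (Suc t') \<le> \<rho> * mm P xmax k s0 x ?l t' + si * (nW P ?l * norm (x t') + norm (lstm_b P ?l Cg))"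
        using mm_step[OF xm conjunct1[OF V] conjunct2[OF V] l, of t'] by (simp add: \<rho>_def si_def)
      also have "\<dots> \<le> \<rho> * mm P xmax k s0 x ?l t' + si * (nW P ?l * U + U)"
        using input_sup_ge_x[of t' T x P L] input_sup_ge_b[OF l, of P x T] that nW_nonneg[of P ?l] si0
        by (intro add_mono order_refl mult_left_mono) (auto simp: U_def)
      finally show ?thesis by (simp add: algebra_simps)
    qed
    have g: "mm P xmax k s0 x ?l t \<le> (mm P xmax k s0 x ?l 0 + 0/(\<mu>-\<rho>)) * \<mu>^t + si*(nW P ?l + 1)*U/(1-\<rho>)"
      by (rule geo[OF r0 rmu1 mu1 _ _ mm_nonneg step tT]) (use si0 nW_nonneg[of P ?l] U0 in auto)
    have m0: "mm P xmax k s0 x ?l 0 \<le> K * S0"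
    proof -
      have "mm P xmax k s0 x ?l 0 \<le> norm (fst (s0 ?l)) + norm (snd (s0 ?l)) / so"
        using mm_le_sum[of P xmax k s0 x ?l 0] by (simp add: so_def)
      also have "\<dots> \<le> S0 + S0/so" using state_norm_ge[OF l, of s0] so0
        by (intro add_mono divide_right_mono) (auto simp: S0_def)
      also have "\<dots> = K*S0" by (simp add: K_def algebra_simps)
      finally show ?thesis .
    qed
    have "(mm P xmax k s0 x ?l 0) * \<mu>^t \<le> (K * S0) * \<mu>^t"
      using m0 r0 rmu1 by (intro mult_right_mono) auto
    moreover have "si*(nW P ?l + 1)*U/(1-\<rho>) = G * U" by (simp add: G_def)
    ultimately have "mm P xmax k s0 x ?l t \<le> K * S0 * \<mu>^t + G*U" using g by simp
    then show "mm P xmax k s0 x (Suc 0) t \<le> K * \<mu>^t * state_norm L s0 + G * input_sup_norm P L x T"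
      by (simp add: S0_def U_def mult_ac)
  qed
next
  case (Suc n)
  let ?l = "Suc (Suc n)"
  let ?l' = "Suc n"
  have l: "?l \<in> {1..L}" using Suc.prems by simp
  have l': "?l' \<in> {1..L}" using Suc.prems by simp
  from Suc.IH obtain K' G' where K'0: "0 \<le> K'" and G'0: "0 \<le> G'"
    and H': "\<And>s0 x T t. (\<forall>l\<in>{1..L}. s0 l \<in> Sset P xmax l k) \<and> (\<forall>\<tau> i. \<bar>x \<tau> $ i\<bar> \<le> xmax) \<Longrightarrow> t \<le> T \<Longrightarrow>
      mm P xmax k s0 x ?l' t \<le> K' * \<mu>^t * state_norm L s0 + G' * input_sup_norm P L x T"
    using Suc.prems by auto
  define so si \<rho> where "so = sig_of P xmax ?l Og (eta_prev P xmax ?l k)"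
    and "si = sig_of P xmax ?l Ig (eta_prev P xmax ?l k)" and "\<rho> = rho P xmax k ?l"
  define so' where "so' = sig_of P xmax ?l' Og (eta_prev P xmax ?l' k)"
  have so0: "0 < so" and si0: "0 < si" unfolding so_def si_def by (rule sig_of_pos)+
  have so'0: "0 < so'" and so'1: "so' < 1" unfolding so'_def by (rule sig_of_pos, rule sig_of_lt1)
  have r0: "0 \<le> \<rho>" unfolding \<rho>_def by (rule rho_nonneg)
  have rmu1: "\<rho> < \<mu>" using rmu l unfolding \<rho>_def by blast
  have mu0: "0 < \<mu>" using r0 rmu1 by linarith
  define nw where "nw = nW P ?l"
  have nw0: "0 \<le> nw" unfolding nw_def by (rule nW_nonneg)
  define K where "K = 1 + 1/so + si * nw * K' * \<mu> / (\<mu> - \<rho>)"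
  define G where "G = si * (nw * G' + 1) / (1 - \<rho>)"
  have K0: "0 \<le> K" using so0 si0 nw0 K'0 mu0 rmu1 by (simp add: K_def)
  have G0: "0 \<le> G" using si0 nw0 G'0 rmu1 mu1 by (simp add: G_def)
  show ?case
  proof (intro exI conjI allI impI)
    show "0 \<le> K" by (rule K0)
    show "0 \<le> G" by (rule G0)
    fix s0 :: "nat \<Rightarrow> (real^'c) \<times> (real^'c)" and x :: "nat \<Rightarrow> real^'x" and T t :: nat
    assume V: "(\<forall>l\<in>{1..L}. s0 l \<in> Sset P xmax l k) \<and> (\<forall>\<tau> i. \<bar>x \<tau> $ i\<bar> \<le> xmax)" and tT: "t \<le> T"
    define U where "U = input_sup_norm P L x T"
    define S0 where "S0 = state_norm L s0"
    have U0: "0 \<le> U" unfolding U_def by (rule input_sup_nonneg)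
    have S00: "0 \<le> S0" unfolding S0_def by (rule state_norm_nonneg)
    define A where "A = si * nw * K' * \<mu> * S0"
    define B where "B = si * (nw * G' * U + U)"
    have A0: "0 \<le> A" using si0 nw0 K'0 mu0 S00 by (simp add: A_def)
    have B0: "0 \<le> B" using si0 nw0 G'0 U0 by (simp add: B_def)
    have step: "mm P xmax k s0 x ?l (Suc t') \<le> \<rho> * mm P xmax k s0 x ?l t' + A * \<mu>^t' + B"
      if "t' < T" for t'
    proof -
      have hb: "norm (snd (traj P s0 x (Suc t') ?l')) \<le> K' * \<mu>^(Suc t') * S0 + G' * U"
      proof -
        have "norm (snd (traj P s0 x (Suc t') ?l')) \<le> so' * mm P xmax k s0 x ?l' (Suc t')"
          unfolding so'_def by (rule mm_ge(2))
        also have "\<dots> \<le> mm P xmax k s0 x ?l' (Suc t')"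
          using so'1 so'0 mm_nonneg[of P xmax k s0 x ?l' "Suc t'"] by (intro mult_left_le_one_le) auto
        also have "\<dots> \<le> K' * \<mu>^(Suc t') * S0 + G' * U"
          using H'[OF V, of "Suc t'" T] that by (simp add: S0_def U_def)
        finally show ?thesis .
      qed
      have "mm P xmax k s0 x ?l (Suc t') \<le> \<rho> * mm P xmax k s0 x ?l t'
          + si * (nw * norm (snd (traj P s0 x (Suc t') ?l')) + norm (lstm_b P ?l Cg))"
        using mm_step[OF xm conjunct1[OF V] conjunct2[OF V] l, of t'] by (simp add: \<rho>_def si_def nw_def)
      also have "\<dots> \<le> \<rho> * mm P xmax k s0 x ?l t' + si * (nw * (K' * \<mu>^(Suc t') * S0 + G' * U) + U)"
        using hb input_sup_ge_b[OF l, of P x T] nw0 si0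
        by (intro add_mono order_refl mult_left_mono) (auto simp: U_def)
      also have "\<dots> = \<rho> * mm P xmax k s0 x ?l t' + A * \<mu>^t' + B"
        by (simp add: A_def B_def algebra_simps)
      finally show ?thesis .
    qed
    have g: "mm P xmax k s0 x ?l t \<le> (mm P xmax k s0 x ?l 0 + A/(\<mu>-\<rho>)) * \<mu>^t + B/(1-\<rho>)"
      by (rule geo[OF r0 rmu1 mu1 A0 B0 mm_nonneg step tT])
    have m0: "mm P xmax k s0 x ?l 0 \<le> (1 + 1/so) * S0"
    proof -
      have "mm P xmax k s0 x ?l 0 \<le> norm (fst (s0 ?l)) + norm (snd (s0 ?l)) / so"
        using mm_le_sum[of P xmax k s0 x ?l 0] by (simp add: so_def)
      also have "\<dots> \<le> S0 + S0/so" using state_norm_ge[OF l, of s0] so0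
        by (intro add_mono divide_right_mono) (auto simp: S0_def)
      also have "\<dots> = (1 + 1/so)*S0" by (simp add: algebra_simps)
      finally show ?thesis .
    qed
    have eqA: "A/(\<mu>-\<rho>) = (si * nw * K' * \<mu> / (\<mu> - \<rho>)) * S0" by (simp add: A_def)
    have eqK: "K * S0 = (1 + 1/so) * S0 + (si * nw * K' * \<mu> / (\<mu> - \<rho>)) * S0"
      unfolding K_def by (rule distrib_right)
    have "mm P xmax k s0 x ?l 0 + A/(\<mu>-\<rho>) \<le> K * S0" using m0 eqA eqK by linarith
    then have "(mm P xmax k s0 x ?l 0 + A/(\<mu>-\<rho>)) * \<mu>^t \<le> (K * S0) * \<mu>^t"
      using mu0 by (intro mult_right_mono) auto
    moreover have "B/(1-\<rho>) = G * U" by (simp add: G_def B_def algebra_simps)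
    ultimately have "mm P xmax k s0 x ?l t \<le> K * S0 * \<mu>^t + G*U" using g by simp
    then show "mm P xmax k s0 x ?l t \<le> K * \<mu>^t * state_norm L s0 + G * input_sup_norm P L x T"
      by (simp add: S0_def U_def mult_ac)
  qed
qed

lemma rho_spec: "spectral_radius (Amat P xmax l k) = rho P xmax k l"
proof -
  have "Amat P xmax l k = map_mat complex_of_real (mat_of_rows_list 2
     [[sig_of P xmax l Fg (eta_prev P xmax l k), sig_of P xmax l Ig (eta_prev P xmax l k) * nU P l],
      [sig_of P xmax l Og (eta_prev P xmax l k) * sig_of P xmax l Fg (eta_prev P xmax l k),
       sig_of P xmax l Og (eta_prev P xmax l k) * (sig_of P xmax l Ig (eta_prev P xmax l k) * nU P l)]])"
    unfolding Amat_def Let_def nU_def sigbar_def by (simp add: mult.assoc)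
  also have "spectral_radius \<dots> = rho P xmax k l"
    unfolding rho_def
    by (rule sr_rank1) (use sig_of_pos[of P xmax l] nU_nonneg[of P l] in \<open>auto intro: less_imp_le mult_nonneg_nonneg\<close>)
  finally show ?thesis .
qed

lemma rho_mono:
  assumes xm: "0 \<le> xmax"
  shows "rho P xmax (Suc k) l \<le> rho P xmax k l"
proof -
  have e: "0 \<le> eta_prev P xmax l (Suc k)" "eta_prev P xmax l (Suc k) \<le> eta_prev P xmax l k"
    using eta_prev_nonneg[of P xmax l "Suc k"] eta_prev_dec[OF xm, of P l k] by auto
  note sm = sig_of_mono[OF xm e, of P l]
  have p: "0 \<le> sig_of P xmax l g \<eta>" for g \<eta> using sig_of_pos[of P xmax l g \<eta>] by simp
  show ?thesis unfolding rho_def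
    using sm[of Fg] sm[of Og] sm[of Ig] p nU_nonneg[of P l]
    by (intro add_mono mult_mono mult_right_mono) (auto intro: mult_nonneg_nonneg)
qed

lemma classKL_lin:
  assumes C: "0 < C" and mu: "0 < \<mu>" "\<mu> < 1"
  shows "classKL (\<lambda>s t. C * \<mu>^t * s)"
  unfolding classKL_def classK_def
proof (intro conjI allI impI)
  fix t
  show "continuous_on {0..} (\<lambda>s. C * \<mu>^t * s)" by (intro continuous_intros)
  show "strict_mono_on {0..} (\<lambda>s. C * \<mu>^t * s)"
    by (rule strict_mono_onI) (use C mu in simp)
  show "C * \<mu>^t * 0 = 0" by simp
next
  fix s :: real assume s: "0 \<le> s"
  show "antimono (\<lambda>t. C * \<mu>^t * s)"
  proof (rule antimonoI)
    fix a b :: nat assume "a \<le> b"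
    then have "\<mu>^b \<le> \<mu>^a" using mu by (intro power_decreasing) auto
    then show "C * \<mu>^b * s \<le> C * \<mu>^a * s" using C s by (intro mult_right_mono mult_left_mono) auto
  qed
  have "(\<lambda>t. C * \<mu>^t * s) \<longlonglongrightarrow> C * 0 * s"
    using mu by (intro tendsto_intros) auto
  then show "(\<lambda>t. C * \<mu>^t * s) \<longlonglongrightarrow> 0" by simp
qed

lemma classKinf_lin:
  assumes C: "1 \<le> C"
  shows "classKinf (\<lambda>u. C * u)"
  unfolding classKinf_def classK_def
proof (intro conjI allI)
  show "continuous_on {0..} (\<lambda>u. C * u)" by (intro continuous_intros)
  show "strict_mono_on {0..} (\<lambda>u. C * u)"
    by (rule strict_mono_onI) (use C in simp)
  show "C * 0 = 0" by simp
  fix M :: real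
  show "\<exists>s\<ge>0. M < C * s"
  proof (intro exI conjI)
    show "0 \<le> \<bar>M\<bar> + 1" by simp
    have "\<bar>M\<bar> + 1 \<le> C * (\<bar>M\<bar> + 1)" using C by (simp add: mult_le_cancel_right1 add_nonneg_pos)
    then show "M < C * (\<bar>M\<bar> + 1)" by linarith
  qed
qed

theorem theoremB4:
  fixes P :: "('x::finite, 'c::finite) lstm" and L :: nat and xmax :: real and k :: nat
  assumes "xmax > 0"
    and "\<forall>l\<in>{1..L}. spectral_radius (Amat P xmax l k) < 1"
  shows "(\<exists>\<beta> \<gamma>. classKL \<beta> \<and> classKinf \<gamma> \<and>
           (\<forall>s0 x t. (\<forall>l\<in>{1..L}. s0 l \<in> Sset P xmax l k) \<and>
                     (\<forall>\<tau> i. \<bar>x \<tau> $ i\<bar> \<le> xmax) \<longrightarrow>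
              state_norm L (traj P s0 x t) \<le> \<beta> (state_norm L s0) t + \<gamma> (input_sup_norm P L x t)))
       \<and> (\<forall>k' l. l \<in> {1..L} \<longrightarrow>
              spectral_radius (Amat P xmax l (Suc k')) \<le> spectral_radius (Amat P xmax l k'))"
proof (intro conjI allI impI)
  have xm: "0 \<le> xmax" using assms(1) by simp
  show "spectral_radius (Amat P xmax l (Suc k')) \<le> spectral_radius (Amat P xmax l k')" for k' l
    unfolding rho_spec by (rule rho_mono[OF xm])
  define rmax where "rmax = Max (insert 0 (rho P xmax k ` {1..L}))"
  have fin: "finite (insert 0 (rho P xmax k ` {1..L}))" by simp
  have r1: "rho P xmax k l < 1" if "l \<in> {1..L}" for l using assms(2) that rho_spec by metis
  have rmax1: "rmax < 1" unfolding rmax_def using fin r1 by (subst Max_less_iff) auto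
  have rmax0: "0 \<le> rmax" unfolding rmax_def using fin by (intro Max_ge) auto
  define \<mu> where "\<mu> = (1 + rmax) / 2"
  have mu1: "\<mu> < 1" and mu0: "0 < \<mu>" using rmax1 rmax0 by (auto simp: \<mu>_def)
  have rmu: "\<forall>l\<in>{1..L}. rho P xmax k l < \<mu>"
  proof
    fix l assume "l \<in> {1..L}"
    then have "rho P xmax k l \<le> rmax" unfolding rmax_def using fin by (intro Max_ge) auto
    then show "rho P xmax k l < \<mu>" using rmax1 by (simp add: \<mu>_def)
  qed
  have "\<forall>l\<in>{1..L}. \<exists>KG. 0 \<le> fst KG \<and> 0 \<le> snd KG \<and>
    (\<forall>s0 x T t. (\<forall>l\<in>{1..L}. s0 l \<in> Sset P xmax l k) \<and> (\<forall>\<tau> i. \<bar>x \<tau> $ i\<bar> \<le> xmax) \<longrightarrow> t \<le> T \<longrightarrow>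
      mm P xmax k s0 x l t \<le> fst KG * \<mu>^t * state_norm L s0 + snd KG * input_sup_norm P L x T)"
  proof
    fix l assume l: "l \<in> {1..L}"
    then obtain n where n: "l = Suc n" "Suc n \<le> L" by (cases l) auto
    from cascade[OF xm rmu mu1 n(2)] show "\<exists>KG. 0 \<le> fst KG \<and> 0 \<le> snd KG \<and>
    (\<forall>s0 x T t. (\<forall>l\<in>{1..L}. s0 l \<in> Sset P xmax l k) \<and> (\<forall>\<tau> i. \<bar>x \<tau> $ i\<bar> \<le> xmax) \<longrightarrow> t \<le> T \<longrightarrow>
      mm P xmax k s0 x l t \<le> fst KG * \<mu>^t * state_norm L s0 + snd KG * input_sup_norm P L x T)"
      unfolding n(1) by (metis fst_conv snd_conv)
  qed
  then obtain f where f: "\<forall>l\<in>{1..L}. 0 \<le> fst (f l) \<and> 0 \<le> snd (f l) \<and>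
    (\<forall>s0 x T t. (\<forall>l\<in>{1..L}. s0 l \<in> Sset P xmax l k) \<and> (\<forall>\<tau> i. \<bar>x \<tau> $ i\<bar> \<le> xmax) \<longrightarrow> t \<le> T \<longrightarrow>
      mm P xmax k s0 x l t \<le> fst (f l) * \<mu>^t * state_norm L s0 + snd (f l) * input_sup_norm P L x T)"
    by (metis bchoice)
  define Kt where "Kt = (\<Sum>l=1..L. 2 * fst (f l))"
  define Gt where "Gt = (\<Sum>l=1..L. 2 * snd (f l))"
  have Kt0: "0 \<le> Kt" unfolding Kt_def using f by (intro sum_nonneg) auto
  have Gt0: "0 \<le> Gt" unfolding Gt_def using f by (intro sum_nonneg) auto
  show "\<exists>\<beta> \<gamma>. classKL \<beta> \<and> classKinf \<gamma> \<and>
           (\<forall>s0 x t. (\<forall>l\<in>{1..L}. s0 l \<in> Sset P xmax l k) \<and>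
                     (\<forall>\<tau> i. \<bar>x \<tau> $ i\<bar> \<le> xmax) \<longrightarrow>
              state_norm L (traj P s0 x t) \<le> \<beta> (state_norm L s0) t + \<gamma> (input_sup_norm P L x t))"
  proof (intro exI conjI allI impI)
    show "classKL (\<lambda>s t. (Kt + 1) * \<mu>^t * s)" by (rule classKL_lin) (use Kt0 mu0 mu1 in auto)
    show "classKinf (\<lambda>u. (Gt + 1) * u)" by (rule classKinf_lin) (use Gt0 in auto)
    fix s0 :: "nat \<Rightarrow> (real^'c) \<times> (real^'c)" and x :: "nat \<Rightarrow> real^'x" and t :: nat
    assume V: "(\<forall>l\<in>{1..L}. s0 l \<in> Sset P xmax l k) \<and> (\<forall>\<tau> i. \<bar>x \<tau> $ i\<bar> \<le> xmax)"
    define S0 where "S0 = state_norm L s0"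
    define U where "U = input_sup_norm P L x t"
    have S00: "0 \<le> S0" unfolding S0_def by (rule state_norm_nonneg)
    have U0: "0 \<le> U" unfolding U_def by (rule input_sup_nonneg)
    have each: "norm (fst (traj P s0 x t l)) + norm (snd (traj P s0 x t l))
        \<le> 2 * fst (f l) * \<mu>^t * S0 + 2 * snd (f l) * U" if l: "l \<in> {1..L}" for l
    proof -
      have so1: "sig_of P xmax l Og (eta_prev P xmax l k) < 1" by (rule sig_of_lt1)
      have a: "norm (fst (traj P s0 x t l)) \<le> mm P xmax k s0 x l t" by (rule mm_ge(1))
      have "norm (snd (traj P s0 x t l)) \<le> sig_of P xmax l Og (eta_prev P xmax l k) * mm P xmax k s0 x l t"
        by (rule mm_ge(2))
      also have "\<dots> \<le> mm P xmax k s0 x l t"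
        using so1 sig_of_pos[of P xmax l Og "eta_prev P xmax l k"] mm_nonneg[of P xmax k s0 x l t]
        by (intro mult_left_le_one_le) auto
      finally have b: "norm (snd (traj P s0 x t l)) \<le> mm P xmax k s0 x l t" .
      have c: "mm P xmax k s0 x l t \<le> fst (f l) * \<mu>^t * S0 + snd (f l) * U"
        using f l V by (auto simp: S0_def U_def)
      show ?thesis using a b c by (simp add: algebra_simps)
    qed
    have "state_norm L (traj P s0 x t) \<le> (\<Sum>l=1..L. norm (fst (traj P s0 x t l)) + norm (snd (traj P s0 x t l)))"
      by (rule state_norm_le_sum)
    also have "\<dots> \<le> (\<Sum>l=1..L. 2 * fst (f l) * \<mu>^t * S0 + 2 * snd (f l) * U)"
      using each by (intro sum_mono) auto
    also have "\<dots> = Kt * \<mu>^t * S0 + Gt * U"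
      by (simp add: Kt_def Gt_def sum.distrib sum_distrib_right)
    also have "\<dots> \<le> (Kt + 1) * \<mu>^t * S0 + (Gt + 1) * U"
      using S00 U0 mu0 by (intro add_mono mult_right_mono) auto
    finally show "state_norm L (traj P s0 x t) \<le> (Kt + 1) * \<mu>^t * state_norm L s0 + (Gt + 1) * input_sup_norm P L x t"
      by (simp add: S0_def U_def)
  qed
qed

end
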